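(* Let $A$ be a Lie conformal algebra and $M$ an $A$-module with a commutative associative product such that $\partial^M$ and all $a_\lambda$ are derivations of it. For $\xi\in\tilde\Gamma_h(A,M)$ and $\zeta\in\tilde\Gamma_j(A,M)$ the contraction operators on $\tilde\Gamma^\bullet(A,M)$ satisfy $\iota_\xi\iota_\zeta=(-1)^{hj}\iota_\zeta\iota_\xi$.
   Context: $\mathbb F$ field of characteristic 0. $\tilde\Gamma^k(A,M)$: $\mathbb F$-linear $\tilde\gamma:A^{\otimes k}\to\mathbb F[\lambda_1,\dots,\lambda_k]\otimes M$ with $\tilde\gamma(\dots,\partial a_i,\dots)=-\lambda_i\tilde\gamma(\dots)$ and skew-symmetric under simultaneous permutations of the $a_i$ and $\lambda_i$. $\tilde\Gamma_h(A,M)$: quotient of $A^{\otimes h}\otimes\mathrm{Hom}_{\mathbb F}(\mathbb F[\lambda_1,\dots,\lambda_h],M)$ by (C1) $\cdots\otimes\partial a_i\otimes\cdots\otimes\phi=-\cdots\otimes\lambda_i^*\phi$ where $(\lambda_i^*\phi)(f)=\phi(\lambda_if)$, and (C2) $a_{\sigma(1)}\otimes\cdots\otimes a_{\sigma(h)}\otimes\sigma^*\phi=\mathrm{sign}(\sigma)a_1\otimes\cdots\otimes a_h\otimes\phi$ where $(\sigma^*\phi)(f(\lambda_1,..,\lambda_h))=\phi(f(\lambda_{\sigma(1)},..,\lambda_{\sigma(h)}))$. Contraction: for $\xi$ represented by $a_1\otimes\cdots\otimes a_h\otimes\phi$ and $\tilde\gamma\in\tilde\Gamma^k$, $k\ge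 h$, $(\iota_\xi\tilde\gamma)_{\lambda_{h+1},\dots,\lambda_k}(a_{h+1},\dots,a_k)=\phi^\mu(\tilde\gamma_{\lambda_1,\dots,\lambda_k}(a_1,\dots,a_k))$, where $\phi^\mu:\mathbb F[\lambda_1,\dots,\lambda_h]\otimes M\to M$, $f\otimes m\mapsto\phi(f)\,m$, applied coefficientwise in $\lambda_{h+1},\dots,\lambda_k$; $\iota_\xi=0$ on $\tilde\Gamma^k$ for $k<h$; extended linearly in $\xi$ (this is well defined and lands in $\tilde\Gamma^{k-h}$). *)

theory Defs
  imports "HOL-Computational_Algebra.Polynomial" "HOL-Library.Poly_Mapping"
          "HOL-Combinatorics.Permutations"
begin

definition Fdmod :: "('f::field \<Rightarrow> 'v::ab_group_add \<Rightarrow> 'v) \<Rightarrow> ('v \<Rightarrow> 'v) \<Rightarrow> bool" where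
  "Fdmod s d \<longleftrightarrow> vector_space s \<and>
     (\<forall>x y. d (x + y) = d x + d y) \<and> (\<forall>c x. d (s c x) = s c (d x))"

text \<open>lambda-brackets [a_lambda b] and lambda-actions a_lambda m are polynomials in one
  variable lambda with coefficients in A (resp. M), i.e. elements of F[lambda] (x) A,
  represented as \<open>'a poly\<close>.\<close>
definition conf_rep ::
  "('f::field \<Rightarrow> 'a::ab_group_add \<Rightarrow> 'a) \<Rightarrow> ('a \<Rightarrow> 'a) \<Rightarrow> ('a \<Rightarrow> 'a \<Rightarrow> 'a poly) \<Rightarrow>
   ('f \<Rightarrow> 'v::ab_group_add \<Rightarrow> 'v) \<Rightarrow> ('v \<Rightarrow> 'v) \<Rightarrow> ('a \<Rightarrow> 'v \<Rightarrow> 'v poly) \<Rightarrow> bool" where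
  "conf_rep sA dA br sV dV act \<longleftrightarrow>
     \<comment> \<open>F-bilinearity\<close>
     (\<forall>a b x n. coeff (act (a + b) x) n = coeff (act a x) n + coeff (act b x) n) \<and>
     (\<forall>a x y n. coeff (act a (x + y)) n = coeff (act a x) n + coeff (act a y) n) \<and>
     (\<forall>c a x n. coeff (act (sA c a) x) n = sV c (coeff (act a x) n)) \<and>
     (\<forall>c a x n. coeff (act a (sV c x)) n = sV c (coeff (act a x) n)) \<and>
     \<comment> \<open>(d a)_lambda x = - lambda a_lambda x\<close>
     (\<forall>a x n. coeff (act (dA a) x) n =
                 (if n = 0 then 0 else - coeff (act a x) (n - 1))) \<and>
     \<comment> \<open>a_lambda (d x) = (d + lambda) a_lambda x\<close>
     (\<forall>a x n. coeff (act a (dV x)) n =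
                 dV (coeff (act a x) n) + (if n = 0 then 0 else coeff (act a x) (n - 1))) \<and>
     \<comment> \<open>a_lambda (b_mu x) - b_mu (a_lambda x) = [a_lambda b]_{lambda+mu} x,
         coefficient of lambda^m mu^n\<close>
     (\<forall>a b x m n. coeff (act a (coeff (act b x) n)) m - coeff (act b (coeff (act a x) m)) n =
        (\<Sum>p\<le>m. sV (of_nat ((m - p + n) choose n))
                     (coeff (act (coeff (br a b) p) x) (m - p + n))))"

text \<open>Lie conformal algebra: F[d]-module with a lambda-bracket that is sesquilinear,
  skew-symmetric ([b_lambda a] = - [a_{-lambda-d} b]) and satisfies the Jacobi identity.\<close>
definition lie_conformal_algebra ::
  "('f::field \<Rightarrow> 'a::ab_group_add \<Rightarrow> 'a) \<Rightarrow> ('a \<Rightarrow> 'a) \<Rightarrow> ('a \<Rightarrow> 'a \<Rightarrow> 'a poly) \<Rightarrow> bool" where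
  "lie_conformal_algebra sA dA br \<longleftrightarrow>
     Fdmod sA dA \<and> conf_rep sA dA br sA dA br \<and>
     (\<forall>a b m. coeff (br b a) m =
        - (\<Sum>n\<le>degree (br a b). sA (of_int ((-1) ^ n * int (n choose m)))
                                   ((dA ^^ (n - m)) (coeff (br a b) n))))"

definition conformal_module ::
  "('f::field \<Rightarrow> 'a::ab_group_add \<Rightarrow> 'a) \<Rightarrow> ('a \<Rightarrow> 'a) \<Rightarrow> ('a \<Rightarrow> 'a \<Rightarrow> 'a poly) \<Rightarrow>
   ('f \<Rightarrow> 'm::ab_group_add \<Rightarrow> 'm) \<Rightarrow> ('m \<Rightarrow> 'm) \<Rightarrow> ('a \<Rightarrow> 'm \<Rightarrow> 'm poly) \<Rightarrow> bool" where
  "conformal_module sA dA br sM dM act \<longleftrightarrow> Fdmod sM dM \<and> conf_rep sA dA br sM dM act"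

definition derivation_product ::
  "('f::field \<Rightarrow> 'm::comm_ring \<Rightarrow> 'm) \<Rightarrow> ('m \<Rightarrow> 'm) \<Rightarrow> ('a \<Rightarrow> 'm \<Rightarrow> 'm poly) \<Rightarrow> bool" where
  "derivation_product sM dM act \<longleftrightarrow>
     (\<forall>c x y. sM c (x * y) = sM c x * y) \<and>
     (\<forall>x y. dM (x * y) = dM x * y + x * dM y) \<and>
     (\<forall>a x y n. coeff (act a (x * y)) n = coeff (act a x) n * y + x * coeff (act a y) n)"

text \<open>Polynomials in the variables lambda_1, lambda_2, ... with coefficients in V are
  represented as finitely supported maps from exponent vectors to V;
  the variable lambda_(i+1) has index i.  F[lambda_1..lambda_k] (x) V consists of those
  whose exponent vectors only involve indices < k.\<close>
type_synonym 'v mpoly = "(nat \<Rightarrow>\<^sub>0 nat) \<Rightarrow>\<^sub>0 'v"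

definition in_vars :: "nat \<Rightarrow> 'v::zero mpoly \<Rightarrow> bool" where
  "in_vars k P \<longleftrightarrow> (\<forall>e\<in>Poly_Mapping.keys P. Poly_Mapping.keys e \<subseteq> {..<k})"

text \<open>Elements of Gamma-tilde^k: F-linear maps A^{(x)k} -> F[lambda_1..lambda_k] (x) M,
  represented as F-multilinear functions on lists of length k.\<close>
definition Gamma_up ::
  "('f::field \<Rightarrow> 'a::ab_group_add \<Rightarrow> 'a) \<Rightarrow> ('a \<Rightarrow> 'a) \<Rightarrow> ('f \<Rightarrow> 'm::ab_group_add \<Rightarrow> 'm) \<Rightarrow>
   nat \<Rightarrow> ('a list \<Rightarrow> 'm mpoly) \<Rightarrow> bool" where
  "Gamma_up sA dA sM k g \<longleftrightarrow>
     (\<forall>as. length as = k \<longrightarrow> in_vars k (g as)) \<and>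
     \<comment> \<open>multilinearity\<close>
     (\<forall>as i c1 c2 b1 b2 (e::nat \<Rightarrow>\<^sub>0 nat). length as = k \<longrightarrow> i < k \<longrightarrow>
        Poly_Mapping.lookup (g (as[i := sA c1 b1 + sA c2 b2])) e =
          sM c1 (Poly_Mapping.lookup (g (as[i := b1])) e) + sM c2 (Poly_Mapping.lookup (g (as[i := b2])) e)) \<and>
     \<comment> \<open>g(.., d a_i, ..) = - lambda_i g(..)\<close>
     (\<forall>as i (e::nat \<Rightarrow>\<^sub>0 nat). length as = k \<longrightarrow> i < k \<longrightarrow>
        Poly_Mapping.lookup (g (as[i := dA (as ! i)])) (e + Poly_Mapping.single i 1) = - Poly_Mapping.lookup (g as) e \<and>
        (Poly_Mapping.lookup e i = 0 \<longrightarrow> Poly_Mapping.lookup (g (as[i := dA (as ! i)])) e = 0)) \<and>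
     \<comment> \<open>skew-symmetry under simultaneous permutation of the a_i and lambda_i\<close>
     (\<forall>as \<sigma> (e::nat \<Rightarrow>\<^sub>0 nat) (e'::nat \<Rightarrow>\<^sub>0 nat). length as = k \<longrightarrow> \<sigma> permutes {..<k} \<longrightarrow>
        (\<forall>i. Poly_Mapping.lookup e' i = Poly_Mapping.lookup e (\<sigma> i)) \<longrightarrow>
        Poly_Mapping.lookup (g (map (\<lambda>i. as ! \<sigma> i) [0..<k])) e' =
          (if evenperm \<sigma> then Poly_Mapping.lookup (g as) e else - Poly_Mapping.lookup (g as) e))"

text \<open>A pure tensor a_1 (x) ... (x) a_h (x) phi with phi in Hom_F(F[lambda_1..lambda_h], M).
  An element of the quotient Gamma-tilde_h is represented by a finite sum (list) of such.\<close>
definition Hom_poly :: "('f::field \<Rightarrow> 'm::ab_group_add \<Rightarrow> 'm) \<Rightarrow> nat \<Rightarrow> ('f mpoly \<Rightarrow> 'm) \<Rightarrow> bool" where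
  "Hom_poly sM h \<phi> \<longleftrightarrow>
     (\<forall>p q. in_vars h p \<longrightarrow> in_vars h q \<longrightarrow> \<phi> (p + q) = \<phi> p + \<phi> q) \<and>
     (\<forall>c p. in_vars h p \<longrightarrow> \<phi> (Poly_Mapping.map (\<lambda>x. c * x) p) = sM c (\<phi> p))"

definition Gamma_low_rep ::
  "('f::field \<Rightarrow> 'm::ab_group_add \<Rightarrow> 'm) \<Rightarrow> nat \<Rightarrow> ('a list \<times> ('f mpoly \<Rightarrow> 'm)) list \<Rightarrow> bool" where
  "Gamma_low_rep sM h xi \<longleftrightarrow> (\<forall>(as, \<phi>)\<in>set xi. length as = h \<and> Hom_poly sM h \<phi>)"

text \<open>Exponent vector restricted to the first h variables, and the remaining part with
  variables renumbered lambda_{h+i} -> lambda_i.\<close>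
definition low_exp :: "nat \<Rightarrow> (nat \<Rightarrow>\<^sub>0 nat) \<Rightarrow> (nat \<Rightarrow>\<^sub>0 nat)" where
  "low_exp h e = (\<Sum>i<h. Poly_Mapping.single i (Poly_Mapping.lookup e i))"

definition high_exp :: "nat \<Rightarrow> (nat \<Rightarrow>\<^sub>0 nat) \<Rightarrow> (nat \<Rightarrow>\<^sub>0 nat)" where
  "high_exp h e = Poly_Mapping.map_key (\<lambda>i. i + h) e"

text \<open>phi^mu : F[lambda_1..lambda_h] (x) M -> M, f (x) m |-> phi(f) m, applied
  coefficientwise in the remaining variables (which are then renumbered).\<close>
definition phi_mu :: "nat \<Rightarrow> ('f::comm_ring_1 mpoly \<Rightarrow> 'm::comm_ring) \<Rightarrow> 'm mpoly \<Rightarrow> 'm mpoly" where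
  "phi_mu h \<phi> P = (\<Sum>e\<in>Poly_Mapping.keys P.
      Poly_Mapping.single (high_exp h e) (\<phi> (Poly_Mapping.single (low_exp h e) 1) * Poly_Mapping.lookup P e))"

text \<open>Contraction iota_xi : Gamma-tilde^k -> Gamma-tilde^{k-h} (zero if k < h);
  the result is normalised to vanish off lists of length k - h.\<close>
definition contr ::
  "nat \<Rightarrow> ('a list \<times> ('f::comm_ring_1 mpoly \<Rightarrow> 'm::comm_ring)) list \<Rightarrow> nat \<Rightarrow>
   ('a list \<Rightarrow> 'm mpoly) \<Rightarrow> ('a list \<Rightarrow> 'm mpoly)" where
  "contr h xi k g = (\<lambda>cs. if h \<le> k \<and> length cs = k - h
       then (\<Sum>(as, \<phi>)\<leftarrow>xi. phi_mu h \<phi> (g (as @ cs)))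
       else 0)"

end

theory Submission
  imports Defs
begin

definition T :: "((nat \<Rightarrow>\<^sub>0 nat) \<Rightarrow> (nat \<Rightarrow>\<^sub>0 nat)) \<Rightarrow> ((nat \<Rightarrow>\<^sub>0 nat) \<Rightarrow> 'm::comm_ring) \<Rightarrow> 'm mpoly \<Rightarrow> 'm mpoly" where
  "T r w P = (\<Sum>e\<in>Poly_Mapping.keys P. Poly_Mapping.single (r e) (w e * Poly_Mapping.lookup P e))"

lemma phi_mu_T: "phi_mu h \<phi> P = T (high_exp h) (\<lambda>e. \<phi> (Poly_Mapping.single (low_exp h e) 1)) P"
  unfolding phi_mu_def T_def by (simp add: mult.commute)

lemma T_superset:
  assumes "finite S" "Poly_Mapping.keys P \<subseteq> S"
  shows "T r w P = (\<Sum>e\<in>S. Poly_Mapping.single (r e) (w e * Poly_Mapping.lookup P e))"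
  unfolding T_def
  by (rule sum.mono_neutral_left[OF assms]) (auto simp: in_keys_iff)

lemma T_add: "T r w (P + Q) = T r w P + T r w Q"
proof -
  let ?S = "Poly_Mapping.keys P \<union> Poly_Mapping.keys Q"
  have "T r w (P + Q) = (\<Sum>e\<in>?S. Poly_Mapping.single (r e) (w e * Poly_Mapping.lookup (P+Q) e))"
    by (rule T_superset) (simp_all add: keys_add)
  also have "\<dots> = (\<Sum>e\<in>?S. Poly_Mapping.single (r e) (w e * Poly_Mapping.lookup P e))
      + (\<Sum>e\<in>?S. Poly_Mapping.single (r e) (w e * Poly_Mapping.lookup Q e))"
    by (simp add: lookup_add distrib_left single_add sum.distrib)
  also have "\<dots> = T r w P + T r w Q"
    by (subst (1 2) T_superset[symmetric]) auto
  finally show ?thesis .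
qed

lemma T_zero[simp]: "T r w 0 = 0" by (simp add: T_def)

lemma T_uminus: "T r w (- P) = - T r w P"
  by (metis T_add T_zero add_eq_0_iff neg_eq_iff_add_eq_0)

lemma T_sum: "finite A \<Longrightarrow> T r w (\<Sum>i\<in>A. f i) = (\<Sum>i\<in>A. T r w (f i))"
  by (induction A rule: finite_induct) (auto simp: T_add)

lemma T_sum_list: "T r w (sum_list (map f xs)) = sum_list (map (\<lambda>x. T r w (f x)) xs)"
  by (induction xs) (auto simp: T_add)

lemma T_single: "T r w (Poly_Mapping.single a c) = Poly_Mapping.single (r a) (w a * c)"
  by (subst T_superset[of "{a}"]) auto

lemma T_comp: "T r2 w2 (T r1 w1 P) = T (r2 \<circ> r1) (\<lambda>e. w2 (r1 e) * w1 e) P"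
  unfolding T_def[of r1 w1 P] T_def[of "r2 \<circ> r1"]
  by (simp add: T_sum T_single mult.assoc)

lemma T_perm:
  assumes "inj \<pi>" "surj \<pi>" "\<And>e. Poly_Mapping.lookup P (\<pi> e) = f (Poly_Mapping.lookup Q e)" "f 0 = 0"
  shows "T r w P = (\<Sum>e\<in>Poly_Mapping.keys Q. Poly_Mapping.single (r (\<pi> e)) (w (\<pi> e) * f (Poly_Mapping.lookup Q e)))"
proof -
  have "Poly_Mapping.keys P \<subseteq> \<pi> ` Poly_Mapping.keys Q"
  proof
    fix x assume x: "x \<in> Poly_Mapping.keys P"
    obtain e where "x = \<pi> e" using assms(2) by (metis surjD)
    with x assms(3,4) show "x \<in> \<pi> ` Poly_Mapping.keys Q" by (metis image_eqI in_keys_iff)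
  qed
  then have "T r w P = (\<Sum>e\<in>\<pi> ` Poly_Mapping.keys Q. Poly_Mapping.single (r e) (w e * Poly_Mapping.lookup P e))"
    by (intro T_superset) auto
  also have "\<dots> = (\<Sum>e\<in>Poly_Mapping.keys Q. Poly_Mapping.single (r (\<pi> e)) (w (\<pi> e) * f (Poly_Mapping.lookup Q e)))"
    by (subst sum.reindex) (auto intro: inj_on_subset[OF assms(1)] simp: assms(3))
  finally show ?thesis .
qed

lemma lookup_map_key: "inj f \<Longrightarrow> Poly_Mapping.lookup (Poly_Mapping.map_key f p) k = Poly_Mapping.lookup p (f k)"
proof -
  assume [transfer_rule]: "inj f"
  show ?thesis by transfer simp
qed


definition cyc :: "nat \<Rightarrow> nat \<Rightarrow> nat \<Rightarrow> nat" where
  "cyc a h i = (if i = a then a + h else if a < i \<and> i \<le> a + h then i - 1 else i)"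

definition bsw :: "nat \<Rightarrow> nat \<Rightarrow> nat \<Rightarrow> nat" where
  "bsw h j i = (if i < j then i + h else if i < h + j then i - j else i)"

lemma cyc_0: "cyc a 0 = id" by (auto simp: cyc_def fun_eq_iff)

lemma cyc_Suc: "cyc a (Suc h) = Transposition.transpose (a+h) (a+h+1) \<circ> cyc a h"
  by (auto simp: cyc_def fun_eq_iff Transposition.transpose_def)

lemma cyc_perm: "permutation (cyc a h) \<and> (evenperm (cyc a h) \<longleftrightarrow> even h)"
proof (induction h)
  case 0 then show ?case by (simp add: cyc_0 permutation_id)
next
  case (Suc h)
  have p: "permutation (Transposition.transpose (a+h) (a+h+1))" by (rule permutation_swap_id)
  have e: "\<not> evenperm (Transposition.transpose (a+h) (a+h+1))" by (simp add: evenperm_swap)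
  from Suc.IH have "permutation (Transposition.transpose (a+h) (a+h+1) \<circ> cyc a h)"
    using p permutation_compose by blast
  moreover have "evenperm (Transposition.transpose (a+h) (a+h+1) \<circ> cyc a h) \<longleftrightarrow> even (Suc h)"
    using evenperm_comp[OF p] Suc.IH e by auto
  ultimately show ?case by (simp only: cyc_Suc)
qed

lemma bsw_0: "bsw h 0 = id" by (auto simp: bsw_def fun_eq_iff)

lemma bsw_Suc: "bsw h (Suc j) = bsw h j \<circ> cyc j h"
  by (auto simp: bsw_def cyc_def fun_eq_iff)

lemma bsw_perm: "permutation (bsw h j) \<and> (evenperm (bsw h j) \<longleftrightarrow> even (h * j))"
proof (induction j)
  case 0 then show ?case by (simp add: bsw_0 permutation_id)
next
  case (Suc j)
  have "permutation (bsw h j \<circ> cyc j h)"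
    using Suc.IH cyc_perm[of j h] permutation_compose by blast
  moreover have "evenperm (bsw h j \<circ> cyc j h) \<longleftrightarrow> even (h * Suc j)"
    using evenperm_comp[of "bsw h j" "cyc j h"] Suc.IH cyc_perm[of j h] by auto
  ultimately show ?case by (simp only: bsw_Suc)
qed

lemma bsw_inv: "bsw j h \<circ> bsw h j = id"
  by (auto simp: bsw_def fun_eq_iff)

lemma bsw_permutes: assumes "h + j \<le> k" shows "bsw h j permutes {..<k}"
proof -
  have "bij (bsw h j)"
    by (metis bsw_inv bij_betw_imageI comp_eq_id_dest o_bij surj_iff)
  moreover have "\<forall>x. x \<notin> {..<k} \<longrightarrow> bsw h j x = x" using assms by (auto simp: bsw_def)
  ultimately show ?thesis by (simp add: permutes_def bij_iff)
qed


lemma inj_bsw: "inj (bsw h j)"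
  by (metis bsw_inv inj_on_id inj_on_imageI2 image_comp image_id)

lemma surj_bsw: "surj (bsw h j)"
  by (metis bsw_inv comp_apply id_apply surjI)

lemma lookup_high: "Poly_Mapping.lookup (high_exp h e) i = Poly_Mapping.lookup e (i + h)"
  unfolding high_exp_def by (subst lookup_map_key) (auto simp: inj_on_def)

lemma lookup_pi: "Poly_Mapping.lookup (Poly_Mapping.map_key (bsw h j) e) i = Poly_Mapping.lookup e (bsw h j i)"
  by (rule lookup_map_key[OF inj_bsw])

lemma low_exp_cong: "(\<And>i. i < h \<Longrightarrow> Poly_Mapping.lookup x i = Poly_Mapping.lookup y i) \<Longrightarrow> low_exp h x = low_exp h y"
  unfolding low_exp_def by (rule sum.cong) auto

lemma pm_eq: "(\<And>i. Poly_Mapping.lookup x i = Poly_Mapping.lookup y i) \<Longrightarrow> x = y"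
  by (rule poly_mapping_eqI) auto

lemma inj_pi: "inj (Poly_Mapping.map_key (bsw h j))"
proof
  fix x y assume "Poly_Mapping.map_key (bsw h j) x = Poly_Mapping.map_key (bsw h j) y"
  then have "\<And>i. Poly_Mapping.lookup x (bsw h j i) = Poly_Mapping.lookup y (bsw h j i)"
    by (metis lookup_pi)
  then show "x = y" by (metis pm_eq surj_bsw surjD)
qed

lemma surj_pi: "surj (Poly_Mapping.map_key (bsw h j))"
proof (rule surjI)
  fix x
  show "Poly_Mapping.map_key (bsw h j) (Poly_Mapping.map_key (bsw j h) x) = x"
    by (rule pm_eq) (simp add: lookup_pi pointfree_idE[OF bsw_inv])
qed

lemma core:
  fixes g :: "'a::ab_group_add list \<Rightarrow> 'm::comm_ring mpoly"
  assumes G: "Gamma_up sA dA sM k g"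
    and len: "length as = h" "length bs = j" "length cs = k - h - j" and hjk: "h + j \<le> k"
  shows "phi_mu h \<phi> (phi_mu j \<psi> (g (bs @ as @ cs))) =
    (if even (h * j) then phi_mu j \<psi> (phi_mu h \<phi> (g (as @ bs @ cs)))
     else - phi_mu j \<psi> (phi_mu h \<phi> (g (as @ bs @ cs))))"
proof -
  let ?\<sigma> = "bsw h j" and ?L = "as @ bs @ cs"
  let ?\<pi> = "Poly_Mapping.map_key (bsw h j)"
  let ?f = "\<lambda>x::'m. if even (h * j) then x else - x"
  let ?F = "\<lambda>x::'m mpoly. if even (h * j) then x else - x"
  have perm: "?\<sigma> permutes {..<k}" by (rule bsw_permutes[OF hjk])
  have lenL: "length ?L = k" using len hjk by simp
  have mapL: "map (\<lambda>i. ?L ! ?\<sigma> i) [0..<k] = bs @ as @ cs"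
  proof (rule nth_equalityI)
    show "length (map (\<lambda>i. ?L ! ?\<sigma> i) [0..<k]) = length (bs @ as @ cs)" using lenL by simp
  next
    fix i assume "i < length (map (\<lambda>i. ?L ! ?\<sigma> i) [0..<k])"
    then have i: "i < k" by simp
    show "map (\<lambda>i. ?L ! ?\<sigma> i) [0..<k] ! i = (bs @ as @ cs) ! i"
      using i len hjk by (auto simp: bsw_def nth_append add.commute)
  qed
  have skew: "Poly_Mapping.lookup (g (bs @ as @ cs)) (?\<pi> e) = ?f (Poly_Mapping.lookup (g ?L) e)" for e
  proof -
    have "Poly_Mapping.lookup (g (map (\<lambda>i. ?L ! ?\<sigma> i) [0..<k])) (?\<pi> e) =
       (if evenperm ?\<sigma> then Poly_Mapping.lookup (g ?L) e else - Poly_Mapping.lookup (g ?L) e)"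
      using G lenL perm unfolding Gamma_up_def by (auto simp: lookup_pi)
    then show ?thesis using mapL bsw_perm[of h j] by simp
  qed
  have "phi_mu h \<phi> (phi_mu j \<psi> (g (bs @ as @ cs))) =
     T (high_exp h \<circ> high_exp j)
       (\<lambda>e. \<phi> (Poly_Mapping.single (low_exp h (high_exp j e)) 1) * \<psi> (Poly_Mapping.single (low_exp j e) 1))
       (g (bs @ as @ cs))"
    by (simp add: phi_mu_T T_comp)
  also have "\<dots> = (\<Sum>e\<in>Poly_Mapping.keys (g ?L).
      Poly_Mapping.single ((high_exp h \<circ> high_exp j) (?\<pi> e))
       (\<phi> (Poly_Mapping.single (low_exp h (high_exp j (?\<pi> e))) 1) * \<psi> (Poly_Mapping.single (low_exp j (?\<pi> e)) 1)
        * ?f (Poly_Mapping.lookup (g ?L) e)))"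
    by (rule T_perm[OF inj_pi surj_pi skew]) simp
  also have "\<dots> = (\<Sum>e\<in>Poly_Mapping.keys (g ?L).
      ?F (Poly_Mapping.single ((high_exp j \<circ> high_exp h) e)
       (\<psi> (Poly_Mapping.single (low_exp j (high_exp h e)) 1) * \<phi> (Poly_Mapping.single (low_exp h e) 1)
        * Poly_Mapping.lookup (g ?L) e)))"
  proof (rule sum.cong[OF refl])
    fix e
    have r: "(high_exp h \<circ> high_exp j) (?\<pi> e) = (high_exp j \<circ> high_exp h) e"
      by (rule pm_eq) (simp add: lookup_high lookup_pi bsw_def algebra_simps)
    have l1: "low_exp h (high_exp j (?\<pi> e)) = low_exp h e"
      by (rule low_exp_cong) (simp add: lookup_high lookup_pi bsw_def)
    have l2: "low_exp j (?\<pi> e) = low_exp j (high_exp h e)"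
      by (rule low_exp_cong) (simp add: lookup_high lookup_pi bsw_def)
    show "Poly_Mapping.single ((high_exp h \<circ> high_exp j) (?\<pi> e))
       (\<phi> (Poly_Mapping.single (low_exp h (high_exp j (?\<pi> e))) 1) * \<psi> (Poly_Mapping.single (low_exp j (?\<pi> e)) 1)
        * ?f (Poly_Mapping.lookup (g ?L) e)) =
      ?F (Poly_Mapping.single ((high_exp j \<circ> high_exp h) e)
       (\<psi> (Poly_Mapping.single (low_exp j (high_exp h e)) 1) * \<phi> (Poly_Mapping.single (low_exp h e) 1)
        * Poly_Mapping.lookup (g ?L) e))"
      unfolding r l1 l2 by (simp add: mult.commute single_uminus)
  qed
  also have "\<dots> = ?F (T (high_exp j \<circ> high_exp h)
       (\<lambda>e. \<psi> (Poly_Mapping.single (low_exp j (high_exp h e)) 1) * \<phi> (Poly_Mapping.single (low_exp h e) 1))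
       (g ?L))"
    by (simp add: T_def sum_negf)
  also have "\<dots> = ?F (phi_mu j \<psi> (phi_mu h \<phi> (g ?L)))"
    by (simp add: phi_mu_T T_comp)
  finally show ?thesis by simp
qed


lemma sum_list_swap:
  fixes f :: "'a \<Rightarrow> 'b \<Rightarrow> 'c::comm_monoid_add"
  shows "sum_list (map (\<lambda>x. sum_list (map (\<lambda>y. f x y) ys)) xs) = sum_list (map (\<lambda>y. sum_list (map (\<lambda>x. f x y) xs)) ys)"
  by (induction xs) (auto simp: sum_list_addf)

lemma sum_list_neg: fixes f :: "'a \<Rightarrow> 'b::ab_group_add" shows "sum_list (map (\<lambda>x. - f x) xs) = - sum_list (map f xs)"
  by (induction xs) auto

lemma phi_mu_sum_list: "phi_mu h \<phi> (sum_list (map f xs)) = sum_list (map (\<lambda>x. phi_mu h \<phi> (f x)) xs)"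
  by (simp add: phi_mu_T T_sum_list)

lemma phi_mu_zero[simp]: "phi_mu h \<phi> 0 = 0" by (simp add: phi_mu_T)

theorem proposition3p4:
  fixes sA :: "'f::field_char_0 \<Rightarrow> 'a::ab_group_add \<Rightarrow> 'a"
    and dA :: "'a \<Rightarrow> 'a"
    and br :: "'a \<Rightarrow> 'a \<Rightarrow> 'a poly"
    and sM :: "'f \<Rightarrow> 'm::comm_ring \<Rightarrow> 'm"
    and dM :: "'m \<Rightarrow> 'm"
    and act :: "'a \<Rightarrow> 'm \<Rightarrow> 'm poly"
    and h j k :: nat
    and xi zeta :: "('a list \<times> ('f mpoly \<Rightarrow> 'm)) list"
    and g :: "'a list \<Rightarrow> 'm mpoly"
  assumes "lie_conformal_algebra sA dA br"
    and "conformal_module sA dA br sM dM act"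
    and "derivation_product sM dM act"
    and "Gamma_low_rep sM h xi"
    and "Gamma_low_rep sM j zeta"
    and "Gamma_up sA dA sM k g"
  shows "contr h xi (k - j) (contr j zeta k g) =
         (if even (h * j) then contr j zeta (k - h) (contr h xi k g)
          else - contr j zeta (k - h) (contr h xi k g))"
proof -
  have xiL: "\<And>x. x \<in> set xi \<Longrightarrow> length (fst x) = h" using assms(4) by (auto simp: Gamma_low_rep_def)
  have zL: "\<And>x. x \<in> set zeta \<Longrightarrow> length (fst x) = j" using assms(5) by (auto simp: Gamma_low_rep_def)
  let ?F = "\<lambda>x::'m mpoly. if even (h * j) then x else - x"
  have main: "contr h xi (k - j) (contr j zeta k g) cs = ?F (contr j zeta (k - h) (contr h xi k g) cs)" for cs
  proof (cases "h + j \<le> k \<and> length cs = k - h - j")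
    case True
    then have hjk: "h + j \<le> k" and lc: "length cs = k - h - j" by auto
    have "contr h xi (k - j) (contr j zeta k g) cs =
        sum_list (map (\<lambda>x. sum_list (map (\<lambda>y. phi_mu h (snd x) (phi_mu j (snd y) (g (fst y @ fst x @ cs)))) zeta)) xi)"
      unfolding contr_def using True xiL
      by (auto simp: case_prod_unfold phi_mu_sum_list intro!: arg_cong[where f=sum_list] map_cong)
    also have "\<dots> = sum_list (map (\<lambda>x. sum_list (map (\<lambda>y. ?F (phi_mu j (snd y) (phi_mu h (snd x) (g (fst x @ fst y @ cs))))) zeta)) xi)"
      using xiL zL
      by (intro arg_cong[where f=sum_list] map_cong refl core[OF assms(6) _ _ lc hjk]) auto
    also have "\<dots> = ?F (sum_list (map (\<lambda>y. sum_list (map (\<lambda>x. phi_mu j (snd y) (phi_mu h (snd x) (g (fst x @ fst y @ cs)))) xi)) zeta))"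
      by (simp add: sum_list_neg sum_list_swap[where xs=xi])
    also have "\<dots> = ?F (contr j zeta (k - h) (contr h xi k g) cs)"
      unfolding contr_def using True zL
      by (auto simp: case_prod_unfold phi_mu_sum_list intro!: arg_cong[where f=sum_list] map_cong)
    finally show ?thesis .
  next
    case False
    have "contr h xi (k - j) (contr j zeta k g) cs = 0"
      unfolding contr_def using False by (cases "j \<le> k"; cases "h \<le> k"; auto simp: case_prod_unfold)
    moreover have "contr j zeta (k - h) (contr h xi k g) cs = 0"
      unfolding contr_def using False by (cases "j \<le> k"; cases "h \<le> k"; auto simp: case_prod_unfold)
    ultimately show ?thesis by simp
  qed
  show ?thesis
    by (rule ext) (simp add: main)
qed

end
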